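(* Let $G=(V,E)$ be a finite graph, let $\lambda>0$, and let $(S_v : v\in V)$ be nonempty finite lists of colors. An $S$-coloring is a map $\sigma$ on $V$ with $\sigma(v)\in S_v$ for all $v$ and $\sigma(u)\neq\sigma(v)$ for all $uv\in E$; identify it with the set $\{(v,\sigma(v)):v\in V\}$. (1) If $|S_v|\ge(1+\lambda)d(v)$ for all $v\in V$, then there is a random $S$-coloring $\sigma$ of $G$ such that for every set $T=\{(u_1,\gamma_1),\dots,(u_k,\gamma_k)\}$ of vertex-color pairs with distinct $u_i$, $$\mathbb{P}(\sigma(u_1)=\gamma_1,\dots,\sigma(u_k)=\gamma_k)\le\prod_{i=1}^k\frac{1}{\lambda d(u_i)},$$ where a factor with $d(u_i)=0$ is interpreted as $+\infty$. (2) If $|S_v|\ge(1+\lambda)\Delta_G$ for all $v\in V$, then there is a random $S$-coloring $\sigma$ of $G$ which is $\frac{1}{\lambda\Delta_G}$-spread, i.e. for every set $T$ of vertex-color pairs, $\mathbb{P}(\sigma\supseteq T)\le(\lambda\Delta_G)^{-|T|}$.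
   Context: $d(v)$ is the degree of $v$ in $G$ and $\Delta_G$ the maximum degree of $G$. A random set $S$ is $p$-spread if $\mathbb{P}(S\supseteq T)\le p^{|T|}$ for all sets $T$. *)

theory Defs
  imports "HOL-Probability.Probability"
begin

definition fin_graph :: "'a set \<Rightarrow> ('a \<Rightarrow> 'a \<Rightarrow> bool) \<Rightarrow> bool" where
  "fin_graph V E \<longleftrightarrow> finite V \<and> (\<forall>u v. E u v \<longrightarrow> u \<in> V \<and> v \<in> V)
     \<and> (\<forall>u v. E u v \<longrightarrow> E v u) \<and> (\<forall>v. \<not> E v v)"

definition deg :: "'a set \<Rightarrow> ('a \<Rightarrow> 'a \<Rightarrow> bool) \<Rightarrow> 'a \<Rightarrow> nat" where
  "deg V E v = card {u \<in> V. E v u}"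

definition maxdeg :: "'a set \<Rightarrow> ('a \<Rightarrow> 'a \<Rightarrow> bool) \<Rightarrow> nat" where
  "maxdeg V E = Max (insert 0 (deg V E ` V))"

definition S_coloring :: "'a set \<Rightarrow> ('a \<Rightarrow> 'a \<Rightarrow> bool) \<Rightarrow> ('a \<Rightarrow> 'c set) \<Rightarrow> ('a \<Rightarrow> 'c) \<Rightarrow> bool" where
  "S_coloring V E S \<sigma> \<longleftrightarrow> (\<forall>v\<in>V. \<sigma> v \<in> S v) \<and> (\<forall>u\<in>V. \<forall>v\<in>V. E u v \<longrightarrow> \<sigma> u \<noteq> \<sigma> v)"

definition coloring_graph :: "'a set \<Rightarrow> ('a \<Rightarrow> 'c) \<Rightarrow> ('a \<times> 'c) set" where
  "coloring_graph V \<sigma> = {(v, \<sigma> v) | v. v \<in> V}"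

end

theory Submission imports Defs begin

lemma prod_bound_mono:
  fixes a b :: "'a \<Rightarrow> real"
  assumes "finite T" "fst ` T \<subseteq> F" "\<forall>u\<in>F. 0 < a u \<and> a u \<le> b u"
  shows "(\<Prod>(u,\<gamma>)\<in>T. 1 / b u) \<le> (\<Prod>(u,\<gamma>)\<in>(T::('a\<times>'c) set). 1 / a u)"
proof (rule prod_mono)
  fix i assume "i \<in> T"
  then have "fst i \<in> F" using assms(2) by auto
  then show "0 \<le> (case i of (u, \<gamma>) \<Rightarrow> 1 / b u) \<and> (case i of (u, \<gamma>) \<Rightarrow> 1 / b u) \<le> (case i of (u, \<gamma>) \<Rightarrow> 1 / a u)"
    using assms(3) by (cases i) (auto intro!: frac_le)
qed

lemma greedy:
  assumes "finite V" "\<forall>u v. E u v \<longrightarrow> E v u" "\<forall>v. \<not> E v v"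
   "\<forall>v\<in>V. finite (S v) \<and> card {u\<in>V. E v u} < card (S v)"
  shows "\<exists>p. (\<forall>\<sigma>\<in>set_pmf p. S_coloring V E S \<sigma>) \<and>
     (\<forall>T. finite T \<and> fst`T \<subseteq> V \<and> inj_on fst T \<longrightarrow>
       measure_pmf.prob p {\<sigma>. \<forall>(u,\<gamma>)\<in>T. \<sigma> u = \<gamma>}
        \<le> (\<Prod>(u,\<gamma>)\<in>T. 1 / (real (card (S u)) - real (card {w\<in>V. E u w}))))"
  using assms(1,4)
proof (induction V rule: finite_induct)
  case empty
  show ?case
    by (rule exI[of _ "return_pmf (\<lambda>_. undefined)"]) (auto simp: S_coloring_def)
next
  case (insert x F)
  have hF: "\<forall>v\<in>F. finite (S v) \<and> card {u\<in>F. E v u} < card (S v)"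
  proof
    fix v assume v: "v \<in> F"
    have "card {u\<in>F. E v u} \<le> card {u\<in>insert x F. E v u}"
      by (rule card_mono) (use insert in auto)
    then show "finite (S v) \<and> card {u\<in>F. E v u} < card (S v)" using insert v by auto
  qed
  obtain p where p_col: "\<forall>\<sigma>\<in>set_pmf p. S_coloring F E S \<sigma>" and
    p_b: "\<forall>T. finite T \<and> fst`T \<subseteq> F \<and> inj_on fst T \<longrightarrow>
       measure_pmf.prob p {\<sigma>. \<forall>(u,\<gamma>)\<in>T. \<sigma> u = \<gamma>}
        \<le> (\<Prod>(u,\<gamma>)\<in>T. 1 / (real (card (S u)) - real (card {w\<in>F. E u w})))"
    using insert.IH[OF hF] by (elim exE conjE) 
  have p_bound: "\<And>T. finite T \<Longrightarrow> fst`T \<subseteq> F \<Longrightarrow> inj_on fst T \<Longrightarrow>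
       measure_pmf.prob p {\<sigma>. \<forall>(u,\<gamma>)\<in>T. \<sigma> u = \<gamma>}
        \<le> (\<Prod>(u,\<gamma>)\<in>T. 1 / (real (card (S u)) - real (card {w\<in>F. E u w})))"
    using p_b by simp
  define N where "N = {w\<in>F. E x w}"
  define A where "A = (\<lambda>\<sigma>::'a\<Rightarrow>'b. S x - \<sigma> ` N)"
  define f where "f = (\<lambda>\<sigma>. map_pmf (\<lambda>c. \<sigma>(x:=c)) (pmf_of_set (A \<sigma>)))"
  define q where "q = bind_pmf p f"
  have degx: "{u\<in>insert x F. E x u} = N" using assms(3) by (auto simp: N_def)
  have finN: "finite N" using insert by (auto simp: N_def)
  have Sx: "finite (S x)" "card N < card (S x)" using insert degx by auto
  have Ane: "finite (A \<sigma>) \<and> A \<sigma> \<noteq> {} \<and> real (card (S x)) - real (card N) \<le> real (card (A \<sigma>))" for \<sigma>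
  proof -
    have "card (S x) - card (\<sigma> ` N) \<le> card (A \<sigma>)"
      unfolding A_def by (rule diff_card_le_card_Diff) (use finN in auto)
    moreover have "card (\<sigma> ` N) \<le> card N" using finN by (rule card_image_le)
    ultimately have "card (S x) - card N \<le> card (A \<sigma>)" by linarith
    then have "0 < card (A \<sigma>)" using Sx by linarith
    then have "finite (A \<sigma>) \<and> A \<sigma> \<noteq> {}" using card_gt_0_iff by blast
    moreover have "real (card (S x)) - real (card N) \<le> real (card (A \<sigma>))"
    proof -
      have "real (card (S x) - card N) = real (card (S x)) - real (card N)"
        using Sx by (intro of_nat_diff) simp
      moreover have "real (card (S x) - card N) \<le> real (card (A \<sigma>))"
        using \<open>card (S x) - card N \<le> card (A \<sigma>)\<close> by (rule of_nat_mono)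
      ultimately show ?thesis by linarith
    qed
    ultimately show ?thesis by blast
  qed
  show ?case
  proof (intro exI[of _ q] conjI allI impI ballI)
    fix \<tau> assume "\<tau> \<in> set_pmf q"
    then obtain \<sigma> c where s: "\<sigma> \<in> set_pmf p" and c: "c \<in> A \<sigma>" and t: "\<tau> = \<sigma>(x:=c)"
      using Ane by (auto simp: q_def f_def)
    have sc: "S_coloring F E S \<sigma>" using p_col s by blast
    show "S_coloring (insert x F) E S \<tau>"
      unfolding S_coloring_def
    proof (intro conjI ballI impI)
      fix v assume "v \<in> insert x F" then show "\<tau> v \<in> S v"
        using sc c insert.hyps by (auto simp: t S_coloring_def A_def)
    next
      fix u v assume uv: "u \<in> insert x F" "v \<in> insert x F" "E u v"
      show "\<tau> u \<noteq> \<tau> v"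
      proof -
        consider "u = x" "v = x" | "u = x" "v \<in> F" | "u \<in> F" "v = x" | "u \<in> F" "v \<in> F" "u \<noteq> x" "v \<noteq> x"
          using uv insert.hyps by auto
        then show ?thesis
        proof cases
          case 1 then show ?thesis using uv assms(3) by auto
        next
          case 2 then show ?thesis using uv c insert.hyps by (auto simp: t A_def N_def)
        next
          case 3 then show ?thesis using uv c insert.hyps assms(2) by (auto simp: t A_def N_def)
        next
          case 4 then show ?thesis using uv sc by (auto simp: t S_coloring_def)
        qed
      qed
    qed
  next
    fix T :: "('a \<times> 'b) set"
    assume T: "finite T \<and> fst ` T \<subseteq> insert x F \<and> inj_on fst T"
    define P where "P = (\<lambda>T::('a \<times> 'b) set. {\<sigma>::'a\<Rightarrow>'b. \<forall>(u,\<gamma>)\<in>T. \<sigma> u = \<gamma>})"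
    define bnd where "bnd = (\<lambda>u. real (card (S u)) - real (card {w\<in>insert x F. E u w}))"
    have bndF: "\<forall>u\<in>F. 0 < bnd u \<and> bnd u \<le> real (card (S u)) - real (card {w\<in>F. E u w})"
    proof
      fix u assume u: "u \<in> F"
      have "card {w\<in>F. E u w} \<le> card {w\<in>insert x F. E u w}"
        by (rule card_mono) (use insert in auto)
      then show "0 < bnd u \<and> bnd u \<le> real (card (S u)) - real (card {w\<in>F. E u w})"
        using insert.prems u by (auto simp: bnd_def)
    qed
    have eq: "emeasure q X = (\<integral>\<^sup>+\<sigma>. emeasure (f \<sigma>) X \<partial>p)" for X
      by (simp add: q_def)
    show "measure_pmf.prob q (P T) \<le> (\<Prod>(u,\<gamma>)\<in>T. 1 / bnd u)"
      unfolding P_def[symmetric] bnd_def[symmetric]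
    proof (cases "x \<in> fst ` T")
      case False
      have "fst ` T \<subseteq> F" using T False by auto
      have pre: "(\<lambda>c. \<sigma>(x:=c)) -` P T = (if \<sigma> \<in> P T then UNIV else {})" for \<sigma>
        using False by (auto simp: P_def) (force+)
      have "emeasure (f \<sigma>) (P T) = indicator (P T) \<sigma>" for \<sigma>
        by (simp add: f_def pre measure_pmf.emeasure_space_1)
      then have "emeasure q (P T) = emeasure p (P T)"
        by (simp add: eq)
      then have "measure_pmf.prob q (P T) = measure_pmf.prob p (P T)"
        by (simp add: measure_pmf.emeasure_eq_measure)
      also have "\<dots> \<le> (\<Prod>(u,\<gamma>)\<in>T. 1 / (real (card (S u)) - real (card {w\<in>F. E u w})))"
        unfolding P_def using p_bound T \<open>fst ` T \<subseteq> F\<close> by blast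
      also have "\<dots> \<le> (\<Prod>(u,\<gamma>)\<in>T. 1 / bnd u)"
        by (rule prod_bound_mono[OF _ \<open>fst ` T \<subseteq> F\<close> bndF]) (use T in auto)
      finally show ?thesis .
    next
      case True
      then obtain \<gamma> where xg: "(x,\<gamma>) \<in> T" by force
      define T' where "T' = T - {(x,\<gamma>)}"
      have T'F: "fst ` T' \<subseteq> F"
      proof
        fix u assume "u \<in> fst ` T'"
        then obtain d where "(u,d) \<in> T'" by force
        then have ud: "(u,d) \<in> T" "(u,d) \<noteq> (x,\<gamma>)" by (auto simp: T'_def)
        then have "u \<noteq> x" using T xg inj_on_def[of fst T] by force
        then show "u \<in> F" using ud T by force
      qed
      have xT': "x \<notin> fst ` T'" using T'F insert.hyps by auto
      define c where "c = 1 / (real (card (S x)) - real (card N))"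
      have cpos: "c > 0" using Sx by (simp add: c_def)
      have pre: "(\<lambda>c. \<sigma>(x:=c)) -` P T = (if \<sigma> \<in> P T' then {\<gamma>} else {})" for \<sigma>
      proof -
        have Tins: "T = insert (x,\<gamma>) T'" using xg by (auto simp: T'_def)
        have key: "\<sigma>(x:=d) \<in> P T \<longleftrightarrow> d = \<gamma> \<and> \<sigma> \<in> P T'" for d
        proof -
          have a: "(\<sigma>(x:=d)) u = \<sigma> u" if "(u,g) \<in> T'" for u g
            using that xT' by force
          have "\<sigma>(x:=d) \<in> P T \<longleftrightarrow> d = \<gamma> \<and> (\<forall>(u,g)\<in>T'. (\<sigma>(x:=d)) u = g)"
            by (simp add: P_def Tins)
          also have "(\<forall>(u,g)\<in>T'. (\<sigma>(x:=d)) u = g) \<longleftrightarrow> (\<forall>(u,g)\<in>T'. \<sigma> u = g)"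
            using a by auto
          finally show ?thesis by (simp add: P_def)
        qed
        show ?thesis using key by auto
      qed
      have le: "emeasure (f \<sigma>) (P T) \<le> ennreal c * indicator (P T') \<sigma>" for \<sigma>
      proof (cases "\<sigma> \<in> P T'")
        case True
        have "measure (pmf_of_set (A \<sigma>)) {\<gamma>} \<le> c"
        proof -
          have "measure (pmf_of_set (A \<sigma>)) {\<gamma>} = real (card (A \<sigma> \<inter> {\<gamma>})) / real (card (A \<sigma>))"
            using Ane[of \<sigma>] by (simp add: measure_pmf_of_set)
          also have "\<dots> \<le> 1 / real (card (A \<sigma>))"
            by (rule divide_right_mono) (auto simp: card_le_Suc0_iff_eq)
          also have "\<dots> \<le> c" unfolding c_def
            using Ane[of \<sigma>] Sx by (intro divide_left_mono) auto
          finally show ?thesis .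
        qed
        then show ?thesis using True
          by (simp add: f_def pre measure_pmf.emeasure_eq_measure ennreal_leI)
      next
        case False
        then show ?thesis by (simp add: f_def pre)
      qed
      have "emeasure q (P T) \<le> (\<integral>\<^sup>+\<sigma>. ennreal c * indicator (P T') \<sigma> \<partial>p)"
        unfolding eq by (rule nn_integral_mono) (rule le)
      also have "\<dots> = ennreal c * emeasure p (P T')"
        by (simp add: nn_integral_cmult)
      also have "\<dots> = ennreal (c * measure_pmf.prob p (P T'))"
        using cpos by (simp add: measure_pmf.emeasure_eq_measure ennreal_mult)
      finally have "measure_pmf.prob q (P T) \<le> c * measure_pmf.prob p (P T')"
        using cpos by (simp add: measure_pmf.emeasure_eq_measure)
      also have "\<dots> \<le> c * (\<Prod>(u,\<gamma>)\<in>T'. 1 / (real (card (S u)) - real (card {w\<in>F. E u w})))"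
        using p_bound[of T'] T T'F cpos by (auto simp: P_def T'_def intro!: mult_left_mono inj_on_diff)
      also have "\<dots> \<le> c * (\<Prod>(u,\<gamma>)\<in>T'. 1 / bnd u)"
        using cpos by (intro mult_left_mono prod_bound_mono[OF _ T'F bndF]) (use T in \<open>auto simp: T'_def\<close>)
      also have "\<dots> = (\<Prod>(u,\<gamma>)\<in>T. 1 / bnd u)"
      proof -
        have "(\<Prod>(u,\<gamma>)\<in>T. 1 / bnd u) = (1 / bnd x) * (\<Prod>(u,\<gamma>)\<in>T'. 1 / bnd u)"
          unfolding T'_def using T xg by (simp add: prod.remove)
        moreover have "1 / bnd x = c" unfolding bnd_def degx c_def by (rule refl)
        ultimately show ?thesis by simp
      qed
      finally show ?thesis .
    qed
  qed
qed


theorem proposition4p1: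
  fixes V :: "'a set" and E :: "'a \<Rightarrow> 'a \<Rightarrow> bool" and S :: "'a \<Rightarrow> 'c set"
    and lam :: real
  assumes G: "fin_graph V E"
    and lam_pos: "lam > 0"
    and S_fin: "\<forall>v\<in>V. finite (S v) \<and> S v \<noteq> {}"
  shows
    "((\<forall>v\<in>V. real (card (S v)) \<ge> (1 + lam) * real (deg V E v)) \<longrightarrow>
       (\<exists>p :: ('a \<Rightarrow> 'c) pmf. (\<forall>\<sigma>\<in>set_pmf p. S_coloring V E S \<sigma>) \<and>
          (\<forall>T :: ('a \<times> 'c) set. finite T \<and> fst ` T \<subseteq> V \<and> inj_on fst T \<and>
               (\<forall>(u, \<gamma>)\<in>T. deg V E u > 0) \<longrightarrow>
             measure_pmf.prob p {\<sigma>. \<forall>(u, \<gamma>)\<in>T. \<sigma> u = \<gamma>}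
               \<le> (\<Prod>(u, \<gamma>)\<in>T. 1 / (lam * real (deg V E u))))))
     \<and>
     ((\<forall>v\<in>V. real (card (S v)) \<ge> (1 + lam) * real (maxdeg V E)) \<longrightarrow>
       (\<exists>p :: ('a \<Rightarrow> 'c) pmf. (\<forall>\<sigma>\<in>set_pmf p. S_coloring V E S \<sigma>) \<and>
          (maxdeg V E > 0 \<longrightarrow>
            (\<forall>T :: ('a \<times> 'c) set.
               measure_pmf.prob p {\<sigma>. T \<subseteq> coloring_graph V \<sigma>}
                 \<le> (1 / (lam * real (maxdeg V E))) ^ card T))))"
proof (intro conjI impI)
  have finV: "finite V" and sym: "\<forall>u v. E u v \<longrightarrow> E v u" and irr: "\<forall>v. \<not> E v v"
    using G by (auto simp: fin_graph_def)
  have cpos: "0 < card (S v)" if "v \<in> V" for v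
    using S_fin that card_gt_0_iff by blast
  {
    assume H: "\<forall>v\<in>V. real (card (S v)) \<ge> (1 + lam) * real (deg V E v)"
    have hyp: "\<forall>v\<in>V. finite (S v) \<and> card {u\<in>V. E v u} < card (S v)"
    proof
      fix v assume v: "v \<in> V"
      show "finite (S v) \<and> card {u\<in>V. E v u} < card (S v)"
      proof (cases "deg V E v = 0")
        case True then show ?thesis using cpos[OF v] S_fin v by (simp add: deg_def)
      next
        case False
        have "real (deg V E v) < (1 + lam) * real (deg V E v)"
          using False lam_pos by (simp add: algebra_simps)
        moreover have "(1 + lam) * real (deg V E v) \<le> real (card (S v))" using H v by blast
        ultimately have "real (deg V E v) < real (card (S v))" by linarith
        then show ?thesis using S_fin v by (simp add: deg_def)
      qed
    qed
    obtain p where p1: "\<forall>\<sigma>\<in>set_pmf p. S_coloring V E S \<sigma>" and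
      p2: "\<forall>T. finite T \<and> fst`T \<subseteq> V \<and> inj_on fst T \<longrightarrow>
       measure_pmf.prob p {\<sigma>. \<forall>(u,\<gamma>)\<in>T. \<sigma> u = \<gamma>}
        \<le> (\<Prod>(u,\<gamma>)\<in>T. 1 / (real (card (S u)) - real (card {w\<in>V. E u w})))"
      using greedy[OF finV sym irr hyp] by (elim exE conjE)
    show "\<exists>p :: ('a \<Rightarrow> 'c) pmf. (\<forall>\<sigma>\<in>set_pmf p. S_coloring V E S \<sigma>) \<and>
          (\<forall>T :: ('a \<times> 'c) set. finite T \<and> fst ` T \<subseteq> V \<and> inj_on fst T \<and>
               (\<forall>(u, \<gamma>)\<in>T. deg V E u > 0) \<longrightarrow>
             measure_pmf.prob p {\<sigma>. \<forall>(u, \<gamma>)\<in>T. \<sigma> u = \<gamma>}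
               \<le> (\<Prod>(u, \<gamma>)\<in>T. 1 / (lam * real (deg V E u))))"
    proof (intro exI[of _ p] conjI allI impI)
      show "\<forall>\<sigma>\<in>set_pmf p. S_coloring V E S \<sigma>" by (rule p1)
    next
      fix T :: "('a \<times> 'c) set"
      assume T: "finite T \<and> fst ` T \<subseteq> V \<and> inj_on fst T \<and> (\<forall>(u, \<gamma>)\<in>T. deg V E u > 0)"
      have "measure_pmf.prob p {\<sigma>. \<forall>(u, \<gamma>)\<in>T. \<sigma> u = \<gamma>}
        \<le> (\<Prod>(u,\<gamma>)\<in>T. 1 / (real (card (S u)) - real (card {w\<in>V. E u w})))"
        using p2 T by blast
      also have "\<dots> \<le> (\<Prod>(u, \<gamma>)\<in>T. 1 / (lam * real (deg V E u)))"
      proof (rule prod_bound_mono[where F = "fst ` T"])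
        show "finite T" using T by blast
        show "fst ` T \<subseteq> fst ` T" by blast
        show "\<forall>u\<in>fst ` T. 0 < lam * real (deg V E u) \<and>
          lam * real (deg V E u) \<le> real (card (S u)) - real (card {w\<in>V. E u w})"
        proof
          fix u assume u: "u \<in> fst ` T"
          then have "u \<in> V" "deg V E u > 0" using T by auto
          then show "0 < lam * real (deg V E u) \<and>
            lam * real (deg V E u) \<le> real (card (S u)) - real (card {w\<in>V. E u w})"
            using H lam_pos by (auto simp: deg_def algebra_simps)
        qed
      qed
      finally show "measure_pmf.prob p {\<sigma>. \<forall>(u, \<gamma>)\<in>T. \<sigma> u = \<gamma>}
               \<le> (\<Prod>(u, \<gamma>)\<in>T. 1 / (lam * real (deg V E u)))" .
    qed
  }
  {
    assume H: "\<forall>v\<in>V. real (card (S v)) \<ge> (1 + lam) * real (maxdeg V E)"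
    have degle: "deg V E v \<le> maxdeg V E" if "v \<in> V" for v
      unfolding maxdeg_def using finV that by (intro Max_ge) auto
    have hyp: "\<forall>v\<in>V. finite (S v) \<and> card {u\<in>V. E v u} < card (S v)"
    proof
      fix v assume v: "v \<in> V"
      show "finite (S v) \<and> card {u\<in>V. E v u} < card (S v)"
      proof (cases "maxdeg V E = 0")
        case True then show ?thesis using cpos[OF v] S_fin v degle[OF v] by (simp add: deg_def)
      next
        case False
        have "real (maxdeg V E) < (1 + lam) * real (maxdeg V E)"
          using False lam_pos by (simp add: algebra_simps)
        moreover have "(1 + lam) * real (maxdeg V E) \<le> real (card (S v))" using H v by blast
        moreover have "real (deg V E v) \<le> real (maxdeg V E)" using degle[OF v] by simp
        ultimately have "real (deg V E v) < real (card (S v))" by linarith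
        then show ?thesis using S_fin v by (simp add: deg_def)
      qed
    qed
    obtain p where p1: "\<forall>\<sigma>\<in>set_pmf p. S_coloring V E S \<sigma>" and
      p2: "\<forall>T. finite T \<and> fst`T \<subseteq> V \<and> inj_on fst T \<longrightarrow>
       measure_pmf.prob p {\<sigma>. \<forall>(u,\<gamma>)\<in>T. \<sigma> u = \<gamma>}
        \<le> (\<Prod>(u,\<gamma>)\<in>T. 1 / (real (card (S u)) - real (card {w\<in>V. E u w})))"
      using greedy[OF finV sym irr hyp] by (elim exE conjE)
    show "\<exists>p :: ('a \<Rightarrow> 'c) pmf. (\<forall>\<sigma>\<in>set_pmf p. S_coloring V E S \<sigma>) \<and>
          (maxdeg V E > 0 \<longrightarrow>
            (\<forall>T :: ('a \<times> 'c) set.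
               measure_pmf.prob p {\<sigma>. T \<subseteq> coloring_graph V \<sigma>}
                 \<le> (1 / (lam * real (maxdeg V E))) ^ card T))"
    proof (intro exI[of _ p] conjI allI impI)
      show "\<forall>\<sigma>\<in>set_pmf p. S_coloring V E S \<sigma>" by (rule p1)
    next
      fix T :: "('a \<times> 'c) set"
      assume D: "maxdeg V E > 0"
      define D' where "D' = lam * real (maxdeg V E)"
      have D'pos: "D' > 0" using D lam_pos by (simp add: D'_def)
      show "measure_pmf.prob p {\<sigma>. T \<subseteq> coloring_graph V \<sigma>}
                 \<le> (1 / (lam * real (maxdeg V E))) ^ card T"
      proof (cases "finite T \<and> fst ` T \<subseteq> V \<and> inj_on fst T")
        case False
        show ?thesis
        proof (cases "finite T")
          case False
          then show ?thesis by (simp add: measure_pmf.prob_le_1)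
        next
          case True
          have "{\<sigma>. T \<subseteq> coloring_graph V \<sigma>} = {}"
          proof (rule ccontr)
            assume "{\<sigma>. T \<subseteq> coloring_graph V \<sigma>} \<noteq> {}"
            then obtain \<sigma> where s: "T \<subseteq> coloring_graph V \<sigma>" by blast
            then have "fst ` T \<subseteq> V" by (auto simp: coloring_graph_def)
            moreover have "inj_on fst T"
            proof (rule inj_onI)
              fix a b assume ab: "a \<in> T" "b \<in> T" "fst a = fst b"
              have "snd a = \<sigma> (fst a)" "snd b = \<sigma> (fst b)"
                using s ab(1,2) by (auto simp: coloring_graph_def)
              then show "a = b" using ab(3) by (simp add: prod_eq_iff)
            qed
            ultimately show False using False True by blast
          qed
          then show ?thesis using D lam_pos by simp
        qed
      next
        case True
        have "measure_pmf.prob p {\<sigma>. T \<subseteq> coloring_graph V \<sigma>}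
            \<le> measure_pmf.prob p {\<sigma>. \<forall>(u, \<gamma>)\<in>T. \<sigma> u = \<gamma>}"
          by (rule measure_pmf.finite_measure_mono) (auto simp: coloring_graph_def)
        also have "\<dots> \<le> (\<Prod>(u,\<gamma>)\<in>T. 1 / (real (card (S u)) - real (card {w\<in>V. E u w})))"
          using p2 True by blast
        also have "\<dots> \<le> (\<Prod>(u,\<gamma>)\<in>T. 1 / (\<lambda>_. D') u)"
        proof (rule prod_bound_mono[where F = V])
          show "finite T" using True by blast
          show "fst ` T \<subseteq> V" using True by blast
          show "\<forall>u\<in>V. 0 < D' \<and> D' \<le> real (card (S u)) - real (card {w\<in>V. E u w})"
          proof
            fix u assume u: "u \<in> V"
            have "real (deg V E u) \<le> real (maxdeg V E)" using degle[OF u] by simp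
            then show "0 < D' \<and> D' \<le> real (card (S u)) - real (card {w\<in>V. E u w})"
              using H u D'pos by (auto simp: deg_def D'_def algebra_simps)
          qed
        qed
        also have "\<dots> = (1 / (lam * real (maxdeg V E))) ^ card T" by (simp add: D'_def)
        finally show ?thesis .
      qed
    qed
  }
qed

end
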